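(* Let $\mathfrak m,\mathfrak m^*$ be complex-valued functions on the edges of the lattice strip and let $\phi=\int_{\gamma_0}\big(\mathfrak m(z)\psi(z)\,dz+\mathfrak m^*(z)\psi^*(z)\,d\bar z\big)$. Then its Hilbert space adjoint is $$\phi^\dagger=\int_{\gamma_0}\big(-\overline{\mathfrak m(z)}\,\psi(z)\,dz+\overline{\mathfrak m^*(z)}\,\psi^*(z)\,d\bar z\big).$$
   Context: Fix integers $a<0<b$, $C=\{a,\dots,b\}$, $C^*=\{a+\frac12,\dots,b-\frac12\}$. $\tilde V$ is the complex inner product space with orthonormal basis $(e_\rho)_{\rho\in\{\pm1\}^C}$, and $\dagger$ is the Hilbert space adjoint. For $x'\in C^*$, $\varsigma_{x'}(\rho)$ flips the signs of $\rho_x$ for $x<x'$; $\psi_{x'}e_\rho=\frac{-\rho_{x'-1/2}+i\rho_{x'+1/2}}{\sqrt2}e_{\varsigma_{x'}(\rho)}$, $\psi^*_{x'}e_\rho=\frac{-i\rho_{x'-1/2}+\rho_{x'+1/2}}{\sqrt2}e_{\varsigma_{x'}(\rho)}$. The lattice strip has vertices $C\times\mathbb Z\subset\mathbb C$ and nearest-neighbour edges identified with their midpoints; on the horizontal edges $x'\in C^*$ at height $0$ the fermions are $\psi(x')=\psi_{x'}$, $\psi^*(x')=\psi^*_{x'}$. The contour $\gamma_0=(a,a+1,\dots,b)$ crosses the strip at height $0$, and for a contour $(w_0,\dots,w_m)$ with $z_j$ the edge joining $w_{j-1},w_j$, $\int(\mathfrak m\psi\,dz+\mathfrak m^*\psi^*\,d\bar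 z)=\sum_j(\mathfrak m(z_j)\psi(z_j)(w_j-w_{j-1})+\mathfrak m^*(z_j)\psi^*(z_j)\overline{(w_j-w_{j-1})})$. *)

theory Defs
  imports "HOL-Analysis.Analysis"
begin

text \<open>Spin configurations \<rho> \<in> {+-1}^C with C = {a..b}, represented as functions
  int \<Rightarrow> int that take values in {-1,1} on C and are normalised to 1 outside C.\<close>
definition configs :: "int \<Rightarrow> int \<Rightarrow> (int \<Rightarrow> int) set" where
  "configs a b = {\<rho>. (\<forall>x\<in>{a..b}. \<rho> x \<in> {-1, 1}) \<and> (\<forall>x. x \<notin> {a..b} \<longrightarrow> \<rho> x = 1)}"

text \<open>Vectors of V~: coordinates w.r.t. the orthonormal basis (e_\<rho>); only values on
  configs a b matter.  Operators are maps vec \<Rightarrow> vec.\<close>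
type_synonym vec = "(int \<Rightarrow> int) \<Rightarrow> complex"
type_synonym op = "vec \<Rightarrow> vec"

definition basis_vec :: "(int \<Rightarrow> int) \<Rightarrow> vec" where
  "basis_vec \<rho> = (\<lambda>\<sigma>. if \<sigma> = \<rho> then 1 else 0)"

definition vinner :: "int \<Rightarrow> int \<Rightarrow> vec \<Rightarrow> vec \<Rightarrow> complex" where
  "vinner a b u v = (\<Sum>\<rho>\<in>configs a b. cnj (u \<rho>) * v \<rho>)"

text \<open>Half-integer points x' \<in> C* are written x' = k + 1/2 with k \<in> {a..b-1}.
  flip k = \<sigma>_{k+1/2}: flips the signs \<rho>_x for x < k + 1/2, i.e. x \<le> k (within C).\<close>
definition flip :: "int \<Rightarrow> int \<Rightarrow> (int \<Rightarrow> int) \<Rightarrow> (int \<Rightarrow> int)" where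
  "flip a k \<rho> = (\<lambda>x. if a \<le> x \<and> x \<le> k then - \<rho> x else \<rho> x)"

definition psi_e :: "int \<Rightarrow> int \<Rightarrow> (int \<Rightarrow> int) \<Rightarrow> vec" where
  "psi_e a k \<rho> = (\<lambda>\<sigma>. ((- of_int (\<rho> k) + \<i> * of_int (\<rho> (k+1))) / complex_of_real (sqrt 2))
                      * basis_vec (flip a k \<rho>) \<sigma>)"

definition psis_e :: "int \<Rightarrow> int \<Rightarrow> (int \<Rightarrow> int) \<Rightarrow> vec" where
  "psis_e a k \<rho> = (\<lambda>\<sigma>. ((- \<i> * of_int (\<rho> k) + of_int (\<rho> (k+1))) / complex_of_real (sqrt 2))
                      * basis_vec (flip a k \<rho>) \<sigma>)"

definition psi :: "int \<Rightarrow> int \<Rightarrow> int \<Rightarrow> op" where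
  "psi a b k v = (\<lambda>\<sigma>. \<Sum>\<rho>\<in>configs a b. v \<rho> * psi_e a k \<rho> \<sigma>)"

definition psis :: "int \<Rightarrow> int \<Rightarrow> int \<Rightarrow> op" where
  "psis a b k v = (\<lambda>\<sigma>. \<Sum>\<rho>\<in>configs a b. v \<rho> * psis_e a k \<rho> \<sigma>)"

text \<open>Fermions on the horizontal edges at height 0: the edge with midpoint x' \<in> C*
  (a complex number with real part k + 1/2) carries \<psi>_{x'} and \<psi>*_{x'}.\<close>
definition psi_field :: "int \<Rightarrow> int \<Rightarrow> complex \<Rightarrow> op" where
  "psi_field a b z = psi a b \<lfloor>Re z\<rfloor>"

definition psis_field :: "int \<Rightarrow> int \<Rightarrow> complex \<Rightarrow> op" where
  "psis_field a b z = psis a b \<lfloor>Re z\<rfloor>"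

definition op_scale :: "complex \<Rightarrow> op \<Rightarrow> op" where
  "op_scale c T = (\<lambda>v \<sigma>. c * T v \<sigma>)"

text \<open>Discrete contour integral along a contour (w_0,...,w_m) given as a list of
  vertices; z_j = (w_{j-1}+w_j)/2 is the edge joining w_{j-1} and w_j.\<close>
definition contour_int ::
  "int \<Rightarrow> int \<Rightarrow> (complex \<Rightarrow> complex) \<Rightarrow> (complex \<Rightarrow> complex) \<Rightarrow> complex list \<Rightarrow> op" where
  "contour_int a b mm ms ws = (\<lambda>v \<sigma>.
     (\<Sum>j\<in>{1..<length ws}.
        let z = (ws ! (j-1) + ws ! j) / 2; d = ws ! j - ws ! (j-1) in
        op_scale (mm z * d) (psi_field a b z) v \<sigma>
        + op_scale (ms z * cnj d) (psis_field a b z) v \<sigma>))"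

definition gamma0 :: "int \<Rightarrow> int \<Rightarrow> complex list" where
  "gamma0 a b = map of_int [a..b]"

end

theory Submission
  imports Defs
begin

definition cpsi :: "int \<Rightarrow> (int \<Rightarrow> int) \<Rightarrow> complex" where
  "cpsi k \<rho> = (- of_int (\<rho> k) + \<i> * of_int (\<rho> (k+1))) / complex_of_real (sqrt 2)"
definition cpsis :: "int \<Rightarrow> (int \<Rightarrow> int) \<Rightarrow> complex" where
  "cpsis k \<rho> = (- \<i> * of_int (\<rho> k) + of_int (\<rho> (k+1))) / complex_of_real (sqrt 2)"

lemma configs_finite: "finite (configs a b)"
proof (rule finite_subset)
  show "configs a b \<subseteq> (\<lambda>f x. if x \<in> {a..b} then f x else 1) ` ({a..b} \<rightarrow>\<^sub>E {-1,1})"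
  proof
    fix \<rho> assume r: "\<rho> \<in> configs a b"
    show "\<rho> \<in> (\<lambda>f x. if x \<in> {a..b} then f x else 1) ` ({a..b} \<rightarrow>\<^sub>E {-1,1})"
    proof (rule image_eqI[where x="restrict \<rho> {a..b}"])
      show "\<rho> = (\<lambda>x. if x \<in> {a..b} then restrict \<rho> {a..b} x else 1)"
        using r by (auto simp: configs_def)
      show "restrict \<rho> {a..b} \<in> {a..b} \<rightarrow>\<^sub>E {-1,1}"
        using r by (auto simp: configs_def)
    qed
  qed
  show "finite ((\<lambda>f x. if x \<in> {a..b} then f x else 1) ` ({a..b} \<rightarrow>\<^sub>E {-1,1::int}))"
    by (intro finite_imageI finite_PiE) auto
qed

lemma flip_flip: "flip a k (flip a k \<rho>) = \<rho>"
  by (auto simp: flip_def)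

lemma flip_configs: "k \<le> b \<Longrightarrow> \<rho> \<in> configs a b \<Longrightarrow> flip a k \<rho> \<in> configs a b"
  by (auto simp: flip_def configs_def)

lemma flip_bij: "k \<le> b \<Longrightarrow> bij_betw (flip a k) (configs a b) (configs a b)"
  by (rule bij_betwI[where g="flip a k"]) (auto simp: flip_configs flip_flip)

lemma psi_at:
  assumes "k \<le> b" "\<sigma> \<in> configs a b"
  shows "psi a b k u \<sigma> = u (flip a k \<sigma>) * cpsi k (flip a k \<sigma>)"
proof -
  have "psi a b k u \<sigma> = (\<Sum>\<rho>\<in>configs a b. if \<rho> = flip a k \<sigma> then u \<rho> * cpsi k \<rho> else 0)"
    unfolding psi_def psi_e_def basis_vec_def cpsi_def
    by (rule sum.cong) (auto simp: flip_flip)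
  also have "\<dots> = u (flip a k \<sigma>) * cpsi k (flip a k \<sigma>)"
    using flip_configs[OF assms] configs_finite by simp
  finally show ?thesis .
qed

lemma psis_at:
  assumes "k \<le> b" "\<sigma> \<in> configs a b"
  shows "psis a b k u \<sigma> = u (flip a k \<sigma>) * cpsis k (flip a k \<sigma>)"
proof -
  have "psis a b k u \<sigma> = (\<Sum>\<rho>\<in>configs a b. if \<rho> = flip a k \<sigma> then u \<rho> * cpsis k \<rho> else 0)"
    unfolding psis_def psis_e_def basis_vec_def cpsis_def
    by (rule sum.cong) (auto simp: flip_flip)
  also have "\<dots> = u (flip a k \<sigma>) * cpsis k (flip a k \<sigma>)"
    using flip_configs[OF assms] configs_finite by simp
  finally show ?thesis .
qed

lemma vinner_reindex:
  "k \<le> b \<Longrightarrow> vinner a b (\<lambda>\<sigma>. f (flip a k \<sigma>)) v = (\<Sum>\<rho>\<in>configs a b. cnj (f \<rho>) * v (flip a k \<rho>))"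
  unfolding vinner_def
  using sum.reindex_bij_betw[OF flip_bij[of k b a], of "\<lambda>\<rho>. cnj (f \<rho>) * v (flip a k \<rho>)"]
  by (simp add: flip_flip)

lemma cpsi_flip: "a \<le> k \<Longrightarrow> cnj (cpsi k \<rho>) = - cpsi k (flip a k \<rho>)"
  by (simp add: cpsi_def flip_def complex_eq_iff)

lemma cpsis_flip: "a \<le> k \<Longrightarrow> cnj (cpsis k \<rho>) = cpsis k (flip a k \<rho>)"
  by (simp add: cpsis_def flip_def complex_eq_iff)

lemma vinner_cong: "(\<And>\<sigma>. \<sigma> \<in> configs a b \<Longrightarrow> u \<sigma> = u' \<sigma>) \<Longrightarrow>
   (\<And>\<sigma>. \<sigma> \<in> configs a b \<Longrightarrow> v \<sigma> = v' \<sigma>) \<Longrightarrow> vinner a b u v = vinner a b u' v'"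
  unfolding vinner_def by (rule sum.cong) auto

lemma psi_adj:
  assumes "a \<le> k" "k \<le> b"
  shows "vinner a b (psi a b k u) v = - vinner a b u (psi a b k v)"
proof -
  have "vinner a b (psi a b k u) v = vinner a b (\<lambda>\<sigma>. (\<lambda>\<rho>. u \<rho> * cpsi k \<rho>) (flip a k \<sigma>)) v"
    by (rule vinner_cong) (auto simp: psi_at[OF assms(2)])
  also have "\<dots> = (\<Sum>\<rho>\<in>configs a b. cnj (u \<rho> * cpsi k \<rho>) * v (flip a k \<rho>))"
    by (rule vinner_reindex[OF assms(2)])
  also have "\<dots> = - (\<Sum>\<rho>\<in>configs a b. cnj (u \<rho>) * (v (flip a k \<rho>) * cpsi k (flip a k \<rho>)))"
    by (simp add: cpsi_flip[OF assms(1)] sum_negf[symmetric] algebra_simps)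
  also have "\<dots> = - vinner a b u (psi a b k v)"
    unfolding vinner_def by (simp add: psi_at[OF assms(2)])
  finally show ?thesis .
qed

lemma psis_adj:
  assumes "a \<le> k" "k \<le> b"
  shows "vinner a b (psis a b k u) v = vinner a b u (psis a b k v)"
proof -
  have "vinner a b (psis a b k u) v = vinner a b (\<lambda>\<sigma>. (\<lambda>\<rho>. u \<rho> * cpsis k \<rho>) (flip a k \<sigma>)) v"
    by (rule vinner_cong) (auto simp: psis_at[OF assms(2)])
  also have "\<dots> = (\<Sum>\<rho>\<in>configs a b. cnj (u \<rho> * cpsis k \<rho>) * v (flip a k \<rho>))"
    by (rule vinner_reindex[OF assms(2)])
  also have "\<dots> = (\<Sum>\<rho>\<in>configs a b. cnj (u \<rho>) * (v (flip a k \<rho>) * cpsis k (flip a k \<rho>)))"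
    by (simp add: cpsis_flip[OF assms(1)] algebra_simps)
  also have "\<dots> = vinner a b u (psis a b k v)"
    unfolding vinner_def by (simp add: psis_at[OF assms(2)])
  finally show ?thesis .
qed

lemma vinner_sum_l: "vinner a b (\<lambda>\<sigma>. \<Sum>j\<in>J. f j \<sigma>) v = (\<Sum>j\<in>J. vinner a b (f j) v)"
  unfolding vinner_def by (simp add: sum_distrib_right sum.swap[of _ J])

lemma vinner_sum_r: "vinner a b u (\<lambda>\<sigma>. \<Sum>j\<in>J. f j \<sigma>) = (\<Sum>j\<in>J. vinner a b u (f j))"
  unfolding vinner_def by (simp add: sum_distrib_left sum.swap[of _ J])

lemma vinner_add_l: "vinner a b (\<lambda>\<sigma>. f \<sigma> + g \<sigma>) v = vinner a b f v + vinner a b g v"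
  unfolding vinner_def by (simp add: distrib_right sum.distrib)

lemma vinner_add_r: "vinner a b u (\<lambda>\<sigma>. f \<sigma> + g \<sigma>) = vinner a b u f + vinner a b u g"
  unfolding vinner_def by (simp add: distrib_left sum.distrib)

lemma vinner_scale_l: "vinner a b (\<lambda>\<sigma>. c * f \<sigma>) v = cnj c * vinner a b f v"
  unfolding vinner_def by (simp add: sum_distrib_left algebra_simps)

lemma vinner_scale_r: "vinner a b u (\<lambda>\<sigma>. c * f \<sigma>) = c * vinner a b u f"
  unfolding vinner_def by (simp add: sum_distrib_left algebra_simps)

lemma gamma0_nth: "j < length (gamma0 a b) \<Longrightarrow> gamma0 a b ! j = of_int (a + int j)"
  unfolding gamma0_def by simp

lemma floor_edge0: "\<lfloor>Re ((of_int n + of_int (n + 1)) / 2 :: complex)\<rfloor> = n"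
proof -
  have "Re ((of_int n + of_int (n + 1)) / 2 :: complex) = of_int n + 1/2"
    by simp
  then show ?thesis by (simp add: floor_eq_iff)
qed

lemma floor_edge: "\<lfloor>Re ((of_int (a + int (j - 1)) + of_int (a + int j)) / 2 :: complex)\<rfloor> = a + int (j - 1)"
  if "j \<ge> 1" for j :: nat
proof -
  have "a + int j = (a + int (j - 1)) + 1" using that by simp
  then show ?thesis using floor_edge0[of "a + int (j - 1)"] by metis
qed

theorem proposition3p11:
  fixes a b :: int and mm ms :: "complex \<Rightarrow> complex"
  assumes "a < 0" and "0 < b"
  shows "\<forall>u v. vinner a b (contour_int a b mm ms (gamma0 a b) u) v
             = vinner a b u (contour_int a b (\<lambda>z. - cnj (mm z)) (\<lambda>z. cnj (ms z)) (gamma0 a b) v)"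
proof (intro allI)
  fix u v
  let ?L = "length (gamma0 a b)"
  show "vinner a b (contour_int a b mm ms (gamma0 a b) u) v
             = vinner a b u (contour_int a b (\<lambda>z. - cnj (mm z)) (\<lambda>z. cnj (ms z)) (gamma0 a b) v)"
    unfolding contour_int_def Let_def op_scale_def vinner_sum_l vinner_sum_r
  proof (rule sum.cong[OF refl])
    fix j assume j: "j \<in> {1..<?L}"
    define z where "z = (gamma0 a b ! (j - 1) + gamma0 a b ! j) / 2"
    define k where "k = a + int (j - 1)"
    have g1: "gamma0 a b ! (j - 1) = of_int (a + int (j - 1))"
      using j by (intro gamma0_nth) auto
    have g2: "gamma0 a b ! j = of_int (a + int j)"
      using j by (intro gamma0_nth) auto
    have ij: "int (j - 1) = int j - 1" using j by auto
    have d: "gamma0 a b ! j - gamma0 a b ! (j - 1) = 1"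
      unfolding g1 g2 ij by simp
    have fz: "\<lfloor>Re z\<rfloor> = k"
      using j floor_edge[of j a] unfolding z_def k_def g1 g2 by simp
    have ak: "a \<le> k" by (simp add: k_def)
    have kb: "k \<le> b" using j unfolding k_def ij by (simp add: gamma0_def) linarith
    show "vinner a b (\<lambda>\<sigma>. mm z * (gamma0 a b ! j - gamma0 a b ! (j - 1)) * psi_field a b z u \<sigma> +
                 ms z * cnj (gamma0 a b ! j - gamma0 a b ! (j - 1)) * psis_field a b z u \<sigma>) v =
          vinner a b u (\<lambda>\<sigma>. - cnj (mm z) * (gamma0 a b ! j - gamma0 a b ! (j - 1)) * psi_field a b z v \<sigma> +
                 cnj (ms z) * cnj (gamma0 a b ! j - gamma0 a b ! (j - 1)) * psis_field a b z v \<sigma>)"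
      unfolding z_def[symmetric] d psi_field_def psis_field_def fz
      by (simp only: vinner_add_l vinner_add_r vinner_scale_l vinner_scale_r psi_adj[OF ak kb] psis_adj[OF ak kb]) simp
  qed
qed

end
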